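(* Let $k\ge 2$ be an integer and suppose $l$ is the minimal size of an alphabet over which there exists an infinite $k$th-power-free word. Then: (1) for every alphabet $\Sigma$ with $|\Sigma|\le l-1$ and every antimorphic involution $\theta$ on $\Sigma^*$, there is no infinite word over $\Sigma$ that is pseudo-$k$th-power-free with respect to $\theta$; and (2) for every finite alphabet $\Sigma'$ and every antimorphic involution $\theta$ on $\Sigma'^*$ with $|\operatorname{Trn}(\theta)|\ge l$, there is an infinite word over $\Sigma'$ that is pseudo-$k$th-power-free with respect to $\theta$.
   Context: Alphabets are totally ordered (letters $0,1,2,\dots$). A $k$th power is a word $u^k$ with $u$ nonempty; a word is $k$th-power-free if none of its factors (contiguous subwords) is a $k$th power. A function $\theta:\Sigma^*\to\Sigma^*$ is an antimorphic involution if $\theta(uv)=\theta(v)\theta(u)$ and $\theta(\theta(w))=w$. $\operatorname{Trn}(\theta)=\{a\in\Sigma:\theta(a)>a\}$. A nonempty word $w$ is a pseudo $k$th power with respect to $\theta$ if $w=u_1\cdots u_k$ where for all $1\le i,j\le k$, $u_i=u_j$ or $u_i=\theta(u_j)$; a word is pseudo-$k$th-power-free if no factor of it is a pseudo $k$th power. *)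

theory Defs
  imports Main
begin

definition alphabet :: "nat \<Rightarrow> nat set" where
  "alphabet n = {0..<n}"

definition kpow :: "nat list \<Rightarrow> nat \<Rightarrow> nat list" where
  "kpow u k = concat (replicate k u)"

definition is_kth_power :: "nat \<Rightarrow> nat list \<Rightarrow> bool" where
  "is_kth_power k x \<longleftrightarrow> (\<exists>u. u \<noteq> [] \<and> x = kpow u k)"

definition inf_factor :: "(nat \<Rightarrow> nat) \<Rightarrow> nat \<Rightarrow> nat \<Rightarrow> nat list" where
  "inf_factor w i j = map w [i..<j]"

definition inf_word_over :: "nat set \<Rightarrow> (nat \<Rightarrow> nat) \<Rightarrow> bool" where
  "inf_word_over \<Sigma> w \<longleftrightarrow> (\<forall>i. w i \<in> \<Sigma>)"

definition inf_kth_power_free :: "nat \<Rightarrow> (nat \<Rightarrow> nat) \<Rightarrow> bool" where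
  "inf_kth_power_free k w \<longleftrightarrow> (\<forall>i j. \<not> is_kth_power k (inf_factor w i j))"

text \<open>Antimorphic involution on \<Sigma>^*: theta is given as a function on all nat lists,
but only its behaviour on words over \<Sigma> is constrained (and used).\<close>
definition antimorphic_involution :: "nat set \<Rightarrow> (nat list \<Rightarrow> nat list) \<Rightarrow> bool" where
  "antimorphic_involution \<Sigma> \<theta> \<longleftrightarrow>
     (\<forall>w\<in>lists \<Sigma>. \<theta> w \<in> lists \<Sigma>) \<and>
     (\<forall>u\<in>lists \<Sigma>. \<forall>v\<in>lists \<Sigma>. \<theta> (u @ v) = \<theta> v @ \<theta> u) \<and>
     (\<forall>w\<in>lists \<Sigma>. \<theta> (\<theta> w) = w)"

definition Trn :: "nat set \<Rightarrow> (nat list \<Rightarrow> nat list) \<Rightarrow> nat set" where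
  "Trn \<Sigma> \<theta> = {a \<in> \<Sigma>. \<exists>b. \<theta> [a] = [b] \<and> a < b}"

definition is_pseudo_kth_power :: "(nat list \<Rightarrow> nat list) \<Rightarrow> nat \<Rightarrow> nat list \<Rightarrow> bool" where
  "is_pseudo_kth_power \<theta> k x \<longleftrightarrow> x \<noteq> [] \<and>
     (\<exists>us. length us = k \<and> concat us = x \<and>
        (\<forall>i<k. \<forall>j<k. us ! i = us ! j \<or> us ! i = \<theta> (us ! j)))"

definition inf_pseudo_kth_power_free :: "(nat list \<Rightarrow> nat list) \<Rightarrow> nat \<Rightarrow> (nat \<Rightarrow> nat) \<Rightarrow> bool" where
  "inf_pseudo_kth_power_free \<theta> k w \<longleftrightarrow>
     (\<forall>i j. \<not> is_pseudo_kth_power \<theta> k (inf_factor w i j))"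

end

theory Submission
  imports Defs
begin

lemma part1:
  assumes "k \<ge> 2" and "is_kth_power k x"
  shows "is_pseudo_kth_power \<theta> k x"
proof -
  obtain u where u: "u \<noteq> []" "x = kpow u k" using assms(2) unfolding is_kth_power_def by blast
  show ?thesis unfolding is_pseudo_kth_power_def
  proof (intro conjI exI[of _ "replicate k u"])
    show "x \<noteq> []" using u assms(1) by (simp add: kpow_def)
  qed (use u in \<open>auto simp: kpow_def\<close>)
qed

lemma theta_nil:
  assumes "antimorphic_involution \<Sigma> \<theta>"
  shows "\<theta> [] = []"
proof -
  have "\<theta> ([] @ []) = \<theta> [] @ \<theta> []" using assms unfolding antimorphic_involution_def by blast
  then show ?thesis by simp
qed

lemma theta_nonTrn:
  assumes ai: "antimorphic_involution \<Sigma> \<theta>" and T: "T = Trn \<Sigma> \<theta>"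
    and u: "u \<noteq> []" "u \<in> lists T"
  shows "\<exists>c\<in>set (\<theta> u). c \<notin> T"
proof -
  obtain u' a where ua: "u = u' @ [a]" using u(1) by (metis rev_exhaust)
  have aT: "a \<in> T" using u ua by auto
  then obtain b where b: "\<theta> [a] = [b]" "a < b" "a \<in> \<Sigma>" using T unfolding Trn_def by blast
  have "T \<subseteq> \<Sigma>" using T unfolding Trn_def by blast
  then have u'S: "u' \<in> lists \<Sigma>" using u ua by auto
  have "\<theta> u = \<theta> [a] @ \<theta> u'" using ai u'S b(3) ua unfolding antimorphic_involution_def by auto
  then have bin: "b \<in> set (\<theta> u)" using b by simp
  have aS: "[a] \<in> lists \<Sigma>" using b(3) by simp
  have "\<theta> (\<theta> [a]) = [a]" using ai aS unfolding antimorphic_involution_def by blast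
  then have "\<theta> [b] = [a]" using b(1) by simp
  then have "b \<notin> T" using T b(2) unfolding Trn_def by auto
  then show ?thesis using bin by blast
qed

lemma part2_key:
  assumes ai: "antimorphic_involution \<Sigma> \<theta>" and T: "T = Trn \<Sigma> \<theta>"
    and x: "x \<in> lists T" and ps: "is_pseudo_kth_power \<theta> k x"
  shows "\<exists>u. u \<noteq> [] \<and> x = kpow u k"
proof -
  obtain us where us: "x \<noteq> []" "length us = k" "concat us = x"
    "\<forall>i<k. \<forall>j<k. us ! i = us ! j \<or> us ! i = \<theta> (us ! j)"
    using ps unfolding is_pseudo_kth_power_def by blast
  have k0: "k > 0" using us(1,2,3) by (cases "k = 0") auto
  have inT: "\<And>i. i < k \<Longrightarrow> us ! i \<in> lists T"
    proof -
    fix i assume "i < k"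
    then have "us ! i \<in> set us" using us(2) by simp
    then have "set (us ! i) \<subseteq> set x" using us(3) by auto
    then show "us ! i \<in> lists T" using x by auto
  qed
  have ne: "\<And>j. j < k \<Longrightarrow> us ! j \<noteq> []"
  proof (rule ccontr)
    fix j assume j: "j < k" "\<not> us ! j \<noteq> []"
    have "\<forall>i<k. us ! i = []"
    proof (intro allI impI)
      fix i assume "i < k"
      then have "us ! i = us ! j \<or> us ! i = \<theta> (us ! j)" using us(4) j(1) by blast
      then show "us ! i = []" using j(2) theta_nil[OF ai] by auto
    qed
    then have "\<forall>u\<in>set us. u = []" using us(2) by (metis in_set_conv_nth)
    then have "concat us = []" by simp
    then show False using us by simp
  qed
  have eq: "\<And>i. i < k \<Longrightarrow> us ! i = us ! 0"
  proof -
    fix i assume i: "i < k"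
    show "us ! i = us ! 0"
    proof (rule ccontr)
      assume "us ! i \<noteq> us ! 0"
      then have "us ! i = \<theta> (us ! 0)" using us(4) i k0 by blast
      moreover obtain c where "c \<in> set (\<theta> (us ! 0))" "c \<notin> T"
        using theta_nonTrn[OF ai T ne[OF k0] inT[OF k0]] by blast
      ultimately show False using inT[OF i] by auto
    qed
  qed
  have "us = replicate k (us ! 0)"
  proof (rule nth_equalityI)
    show "length us = length (replicate k (us ! 0))" using us(2) by simp
    fix i assume "i < length us"
    then show "us ! i = replicate k (us ! 0) ! i" using eq[of i] us(2) by simp
  qed
  then have "x = kpow (us ! 0) k" using us(3) by (simp add: kpow_def)
  then show ?thesis using ne[OF k0] by blast
qed

theorem mainTheorem12:
  fixes k l :: nat
  assumes "k \<ge> 2"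
    and "\<exists>w. inf_word_over (alphabet l) w \<and> inf_kth_power_free k w"
    and "\<forall>n<l. \<not> (\<exists>w. inf_word_over (alphabet n) w \<and> inf_kth_power_free k w)"
  shows "(\<forall>n \<theta>. n \<le> l - 1 \<longrightarrow> antimorphic_involution (alphabet n) \<theta> \<longrightarrow>
            \<not> (\<exists>w. inf_word_over (alphabet n) w \<and> inf_pseudo_kth_power_free \<theta> k w))
       \<and> (\<forall>m \<theta>. antimorphic_involution (alphabet m) \<theta> \<longrightarrow>
            card (Trn (alphabet m) \<theta>) \<ge> l \<longrightarrow>
            (\<exists>w. inf_word_over (alphabet m) w \<and> inf_pseudo_kth_power_free \<theta> k w))"
proof (intro conjI allI impI)
  fix n \<theta> assume n: "n \<le> l - 1"
  show "\<not> (\<exists>w. inf_word_over (alphabet n) w \<and> inf_pseudo_kth_power_free \<theta> k w)"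
  proof
    assume "\<exists>w. inf_word_over (alphabet n) w \<and> inf_pseudo_kth_power_free \<theta> k w"
    then obtain w where w: "inf_word_over (alphabet n) w" "inf_pseudo_kth_power_free \<theta> k w" by blast
    show False
    proof (cases "l = 0")
      case True
      then have "n = 0" using n by simp
      then show False using w(1) unfolding inf_word_over_def alphabet_def by auto
    next
      case False
      then have "n < l" using n by simp
      then have "\<not> inf_kth_power_free k w" using assms(3) w(1) by blast
      then obtain i j where "is_kth_power k (inf_factor w i j)" unfolding inf_kth_power_free_def by blast
      then show False using part1[OF assms(1)] w(2) unfolding inf_pseudo_kth_power_free_def by blast
    qed
  qed
next
  fix m \<theta> assume ai: "antimorphic_involution (alphabet m) \<theta>"
    and c: "card (Trn (alphabet m) \<theta>) \<ge> l"
  define T where "T = Trn (alphabet m) \<theta>"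
  have TS: "T \<subseteq> alphabet m" unfolding T_def Trn_def by blast
  have fT: "finite T" using TS unfolding alphabet_def by (meson finite_atLeastLessThan finite_subset)
  obtain v where v: "inf_word_over (alphabet l) v" "inf_kth_power_free k v" using assms(2) by blast
  obtain f where f: "f ` {0..<l} \<subseteq> T" "inj_on f {0..<l}"
    using card_le_inj[of "{0..<l}" T] fT c unfolding T_def by auto
  define g where "g = inv_into {0..<l} f"
  define w where "w = f \<circ> v"
  have vl: "\<And>i. v i \<in> {0..<l}" using v(1) unfolding inf_word_over_def alphabet_def by blast
  show "\<exists>w. inf_word_over (alphabet m) w \<and> inf_pseudo_kth_power_free \<theta> k w"
  proof (intro exI conjI)
    show "inf_word_over (alphabet m) w" unfolding inf_word_over_def w_def using f(1) TS vl by (auto simp: image_subset_iff)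
    show "inf_pseudo_kth_power_free \<theta> k w" unfolding inf_pseudo_kth_power_free_def
    proof (intro allI notI)
      fix i j assume ps: "is_pseudo_kth_power \<theta> k (inf_factor w i j)"
      have xT: "inf_factor w i j \<in> lists T" unfolding inf_factor_def w_def using f(1) vl by (auto simp: image_subset_iff)
      obtain u where u: "u \<noteq> []" "inf_factor w i j = kpow u k"
        using part2_key[OF ai T_def xT ps] by blast
      have bk: "map g (inf_factor w i j) = inf_factor v i j"
        unfolding inf_factor_def w_def g_def using f(2) vl by (simp add: inv_into_f_f)
      have "inf_factor v i j = kpow (map g u) k"
        using bk u(2) by (simp add: kpow_def map_concat)
      then have "is_kth_power k (inf_factor v i j)" unfolding is_kth_power_def using u(1) by auto
      then show False using v(2) unfolding inf_kth_power_free_def by blast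
    qed
  qed
qed

end
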